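(* For every semistandard hook-valued tableau $T$, the tableau $\mathcal{V}_b(T)$ obtained by applying the uncrowding bumping to $T$ is again a semistandard hook-valued tableau.
   Context: French notation: row $1$ is the bottom row, rows are numbered upward, columns from left to right; cell $(r,c)$ lies in row $r$ and column $c$. A semistandard tableau of hook shape $U$ consists of a hook entry $x$ (the corner box), a leg $\ell_1<\dots<\ell_p$ stacked above $x$ with $x<\ell_1$, and an arm $a_1\le\dots\le a_q$ to the right of $x$ with $x\le a_1$ ($p,q\ge 0$, positive integer entries); write $\mathsf H(U)=x$, $\mathsf L(U)=(\ell_1,\dots,\ell_p)$, $\mathsf L^+(U)=(x,\ell_1,\dots,\ell_p)$ (extended leg), $\mathsf A(U)=(a_1,\dots,a_q)$. A (semistandard) hook-valued tableau (HVT) of partition shape $\lambda$ is a filling of the cells of the Young diagram of $\lambda$ by such hook tableaux such that $\max(A)\le\min(B)$ whenever the cell containing $A$ is in the same row and left of the cell containing $B$, and $\max(A)<\min(C)$ whenever the cell containing $A$ is in the same column and below the cell containing $C$. For a cell $(r,c)$ of $T$ write $\mathsf H_T(r,c),\mathsf L_T(r,c),\mathsf L^+_T(r,c),\mathsf A_T(r,c)$. The arm excess of $T$ is the total number of arm entries over all cells. Uncrowding bumping $\mathcal V_b$: if $T$ has arm excess $0$, $\mathcal V_b(T)=T$. Otherwise let $c$ be the largest index of a column containing a cell with nonempty arm; among the cells of column $c$ with nonempty arm let $(r,c)$ be the one whose arm contains the largest value (the topmost such cell). Let $a$ be the largest (rightmost) arm entry of $(r,c)$, $\ell$ the largest leg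 entry of $(r,c)$, and let $(a,\ell]\cap\mathsf L_T(r,c)$ denote the set of leg entries $x$ of $(r,c)$ with $a<x\le \ell$ (empty if the leg is empty). In column $c+1$ find the smallest entry (among all entries of all cells of column $c+1$) that is $\ge a$. If none exists, attach a new empty cell on top of column $c+1$, let $\tilde r$ be its row and let $k$ be the empty character; otherwise let $k$ be this entry and $(\tilde r,c+1)$ the cell containing it. (a) If $\tilde r\ne r$: remove $a$ from $\mathsf A_T(r,c)$, put $a$ in the position of $k$ in cell $(\tilde r,c+1)$ (if the cell is new, $a$ becomes its hook entry), and append $k$ (if nonempty) to the arm of $(\tilde r,c+1)$. (b) If $\tilde r=r$: remove the entries $(a,\ell]\cap\mathsf L_T(r,c)$ from the leg of $(r,c)$ and remove $a$ from the arm of $(r,c)$, insert these leg entries into the leg of $(r,c+1)$, replace the hook entry of $(r,c+1)$ by $a$, and append $k$ (if nonempty) to the arm of $(r,c+1)$. The resulting tableau is $\mathcal V_b(T)$. *)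

theory Defs
  imports Main
begin

text \<open>French notation; cells are pairs (row, column), both numbered from 1.\<close>

datatype hook = Hook (hook_x: nat) (hook_leg: "nat list") (hook_arm: "nat list")

type_synonym hvt = "nat \<times> nat \<Rightarrow> hook option"

definition hook_entries :: "hook \<Rightarrow> nat list" where
  "hook_entries U = hook_x U # hook_leg U @ hook_arm U"

definition ss_hook :: "hook \<Rightarrow> bool" where
  "ss_hook U \<longleftrightarrow> 0 < hook_x U \<and> sorted_wrt (<) (hook_x U # hook_leg U)
     \<and> sorted (hook_x U # hook_arm U)"

definition hmax :: "hook \<Rightarrow> nat" where "hmax U = Max (set (hook_entries U))"
definition hmin :: "hook \<Rightarrow> nat" where "hmin U = Min (set (hook_entries U))"

definition is_partition :: "nat list \<Rightarrow> bool" where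
  "is_partition la \<longleftrightarrow> sorted_wrt (\<ge>) la \<and> (\<forall>x\<in>set la. 0 < x)"

definition young_diagram :: "nat list \<Rightarrow> (nat \<times> nat) set" where
  "young_diagram la = {(r, c). 1 \<le> r \<and> r \<le> length la \<and> 1 \<le> c \<and> c \<le> la ! (r - 1)}"

definition is_HVT_shape :: "nat list \<Rightarrow> hvt \<Rightarrow> bool" where
  "is_HVT_shape la T \<longleftrightarrow> is_partition la \<and> dom T = young_diagram la
     \<and> (\<forall>U\<in>ran T. ss_hook U)
     \<and> (\<forall>r c c' A B. T (r, c) = Some A \<longrightarrow> T (r, c') = Some B \<longrightarrow> c < c' \<longrightarrow> hmax A \<le> hmin B)
     \<and> (\<forall>r r' c A C. T (r, c) = Some A \<longrightarrow> T (r', c) = Some C \<longrightarrow> r < r' \<longrightarrow> hmax A < hmin C)"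

definition is_HVT :: "hvt \<Rightarrow> bool" where
  "is_HVT T \<longleftrightarrow> (\<exists>la. is_HVT_shape la T)"

definition arm_excess :: "hvt \<Rightarrow> nat" where
  "arm_excess T = (\<Sum>p\<in>dom T. length (hook_arm (the (T p))))"

definition has_arm :: "hvt \<Rightarrow> nat \<Rightarrow> nat \<Rightarrow> bool" where
  "has_arm T r c \<longleftrightarrow> (\<exists>U. T (r, c) = Some U \<and> hook_arm U \<noteq> [])"

definition arm_top :: "hvt \<Rightarrow> nat \<Rightarrow> nat \<Rightarrow> nat" where
  "arm_top T r c = last (hook_arm (the (T (r, c))))"

definition bump_col :: "hvt \<Rightarrow> nat" where
  "bump_col T = (GREATEST c. \<exists>r. has_arm T r c)"

definition bump_row :: "hvt \<Rightarrow> nat \<Rightarrow> nat" where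
  "bump_row T c = (GREATEST r. has_arm T r c \<and>
      (\<forall>r'. has_arm T r' c \<longrightarrow> arm_top T r' c \<le> arm_top T r c))"

definition replace_and_append :: "nat \<Rightarrow> nat \<Rightarrow> hook \<Rightarrow> hook" where
  "replace_and_append k a V =
     (if hook_x V = k then Hook a (hook_leg V) (hook_arm V @ [k])
      else if k \<in> set (hook_leg V)
        then Hook (hook_x V) (map (\<lambda>y. if y = k then a else y) (hook_leg V)) (hook_arm V @ [k])
        else Hook (hook_x V) (hook_leg V) (map (\<lambda>y. if y = k then a else y) (hook_arm V) @ [k]))"

definition uncrowd_bump :: "hvt \<Rightarrow> hvt" where
  "uncrowd_bump T =
    (if arm_excess T = 0 then T else
     (let c = bump_col T; r = bump_row T c; U = the (T (r, c));
          a = last (hook_arm U); l = last (hook_leg U);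
          moved = filter (\<lambda>x. a < x \<and> x \<le> l) (hook_leg U);
          U_a = Hook (hook_x U) (hook_leg U) (butlast (hook_arm U));
          U_b = Hook (hook_x U) (filter (\<lambda>x. \<not> (a < x \<and> x \<le> l)) (hook_leg U)) (butlast (hook_arm U));
          S = {v. \<exists>r' V. T (r', Suc c) = Some V \<and> v \<in> set (hook_entries V) \<and> a \<le> v}
      in if S = {} then
           (let rt = card {r'. (r', Suc c) \<in> dom T} + 1 in
            if rt \<noteq> r then T((r, c) := Some U_a, (rt, Suc c) := Some (Hook a [] []))
            else T((r, c) := Some U_b, (r, Suc c) := Some (Hook a (sort moved) [])))
         else
           (let k = Min S;
                rt = (SOME r'. \<exists>V. T (r', Suc c) = Some V \<and> k \<in> set (hook_entries V));
                V = the (T (rt, Suc c))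
            in if rt \<noteq> r then T((r, c) := Some U_a, (rt, Suc c) := Some (replace_and_append k a V))
               else T((r, c) := Some U_b,
                      (r, Suc c) := Some (Hook a (sort (hook_leg V @ moved)) (hook_arm V @ [k]))))))"

end

theory Submission imports Defs begin

definition ents :: "hook \<Rightarrow> nat set" where "ents U = set (hook_entries U)"

definition opt :: "nat \<times> nat \<Rightarrow> nat \<Rightarrow> nat \<times> nat \<Rightarrow> nat \<Rightarrow> bool" where
  "opt p x q y \<longleftrightarrow> (fst p = fst q \<and> snd p < snd q \<longrightarrow> x \<le> y) \<and> (fst p = fst q \<and> snd q < snd p \<longrightarrow> y \<le> x)
     \<and> (snd p = snd q \<and> fst p < fst q \<longrightarrow> x < y) \<and> (snd p = snd q \<and> fst q < fst p \<longrightarrow> y < x)"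

definition ordered :: "hvt \<Rightarrow> bool" where
  "ordered T \<longleftrightarrow> (\<forall>p q A B x y. T p = Some A \<longrightarrow> T q = Some B \<longrightarrow> p \<noteq> q \<longrightarrow> x \<in> ents A \<longrightarrow> y \<in> ents B \<longrightarrow> opt p x q y)"

lemma orderedD:
  assumes "ordered T" "T p = Some A" "T q = Some B" "p \<noteq> q" "x \<in> ents A" "y \<in> ents B"
  shows "opt p x q y"
  using assms unfolding ordered_def by blast

lemma opt_sym: "opt p x q y = opt q y p x"
  by (auto simp: opt_def)

lemma ents_fin: "finite (ents U)" and ents_ne: "ents U \<noteq> {}"
  by (auto simp: ents_def hook_entries_def)

lemma ents_simp: "ents U = insert (hook_x U) (set (hook_leg U) \<union> set (hook_arm U))"
  by (auto simp: ents_def hook_entries_def)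

lemma hmax_le_hmin: "hmax A \<le> hmin B \<longleftrightarrow> (\<forall>x\<in>ents A. \<forall>y\<in>ents B. x \<le> y)"
  using ents_fin[of A] ents_ne[of A] ents_fin[of B] ents_ne[of B]
  unfolding hmax_def hmin_def ents_def[symmetric] by (auto simp: Max_le_iff Min_ge_iff)

lemma hmax_less_hmin: "hmax A < hmin B \<longleftrightarrow> (\<forall>x\<in>ents A. \<forall>y\<in>ents B. x < y)"
  using ents_fin[of A] ents_ne[of A] ents_fin[of B] ents_ne[of B]
  unfolding hmax_def hmin_def ents_def[symmetric] by (auto simp: Max_less_iff Min_gr_iff)

lemma ordered_iff:
  "ordered T \<longleftrightarrow>
     (\<forall>r c c' A B. T (r, c) = Some A \<longrightarrow> T (r, c') = Some B \<longrightarrow> c < c' \<longrightarrow> hmax A \<le> hmin B)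
     \<and> (\<forall>r r' c A C. T (r, c) = Some A \<longrightarrow> T (r', c) = Some C \<longrightarrow> r < r' \<longrightarrow> hmax A < hmin C)"
  unfolding hmax_le_hmin hmax_less_hmin
proof (intro iffI conjI allI impI ballI)
  fix r c c' A B x y assume o: "ordered T" and *: "T (r, c) = Some A" "T (r, c') = Some B" "c < c'" "x \<in> ents A" "y \<in> ents B"
  have "opt (r,c) x (r,c') y" using orderedD[OF o *(1,2) _ *(4,5)] *(3) by simp
  then show "x \<le> y" using * by (simp add: opt_def)
next
  fix r r' c A B x y assume o: "ordered T" and *: "T (r, c) = Some A" "T (r', c) = Some B" "r < r'" "x \<in> ents A" "y \<in> ents B"
  have "opt (r,c) x (r',c) y" using orderedD[OF o *(1,2) _ *(4,5)] *(3) by simp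
  then show "x < y" using * by (simp add: opt_def)
next
  assume h: "(\<forall>r c c' A B. T (r, c) = Some A \<longrightarrow> T (r, c') = Some B \<longrightarrow> c < c' \<longrightarrow> (\<forall>x\<in>ents A. \<forall>y\<in>ents B. x \<le> y)) \<and>
    (\<forall>r r' c A C. T (r, c) = Some A \<longrightarrow> T (r', c) = Some C \<longrightarrow> r < r' \<longrightarrow> (\<forall>x\<in>ents A. \<forall>y\<in>ents C. x < y))"
  note h1 = h[THEN conjunct1, rule_format] and h2 = h[THEN conjunct2, rule_format]
  show "ordered T" unfolding ordered_def opt_def
  proof (intro allI impI conjI)
    fix p q A B x y assume *: "T p = Some A" "T q = Some B" "x \<in> ents A" "y \<in> ents B"
    obtain i j where p: "p = (i,j)" by fastforce
    obtain i' j' where q: "q = (i',j')" by fastforce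
    show "fst p = fst q \<and> snd p < snd q \<Longrightarrow> x \<le> y" using h1[of i j A j' B x y] * unfolding p q by simp
    show "fst p = fst q \<and> snd q < snd p \<Longrightarrow> y \<le> x" using h1[of i j' B j A y x] * unfolding p q by simp
    show "snd p = snd q \<and> fst p < fst q \<Longrightarrow> x < y" using h2[of i j A i' B x y] * unfolding p q by simp
    show "snd p = snd q \<and> fst q < fst p \<Longrightarrow> y < x" using h2[of i' j B i A y x] * unfolding p q by simp
  qed
qed

lemma ordered_shrink:
  assumes o: "ordered T" and tp: "T p = Some U" and sub: "ents U' \<subseteq> ents U"
  shows "ordered (T(p := Some U'))"
  unfolding ordered_def
proof (intro allI impI)
  fix p1 q1 A B x y
  assume a: "(T(p := Some U')) p1 = Some A" "(T(p := Some U')) q1 = Some B" "p1 \<noteq> q1" "x \<in> ents A" "y \<in> ents B"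
  have "\<exists>A0. T p1 = Some A0 \<and> x \<in> ents A0"
    using a tp sub by (cases "p1 = p") auto
  then obtain A0 where A0: "T p1 = Some A0" "x \<in> ents A0" by blast
  have "\<exists>B0. T q1 = Some B0 \<and> y \<in> ents B0"
    using a tp sub by (cases "q1 = p") auto
  then obtain B0 where B0: "T q1 = Some B0" "y \<in> ents B0" by blast
  show "opt p1 x q1 y" using orderedD[OF o A0(1) B0(1) a(3) A0(2) B0(2)] .
qed

lemma ordered_new:
  assumes o: "ordered T"
    and h: "\<And>x q B y. x \<in> ents N \<Longrightarrow> q \<noteq> p \<Longrightarrow> T q = Some B \<Longrightarrow> y \<in> ents B \<Longrightarrow> opt p x q y"
  shows "ordered (T(p := Some N))"
  unfolding ordered_def
proof (intro allI impI)
  fix p1 q1 A B x y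
  assume a: "(T(p := Some N)) p1 = Some A" "(T(p := Some N)) q1 = Some B" "p1 \<noteq> q1" "x \<in> ents A" "y \<in> ents B"
  show "opt p1 x q1 y"
  proof (cases "p1 = p")
    case True
    then have "q1 \<noteq> p" "A = N" "T q1 = Some B" using a by auto
    then show ?thesis using h a True by blast
  next
    case False
    note F = False
    show ?thesis
    proof (cases "q1 = p")
      case True
      then have "B = N" "T p1 = Some A" using a F by auto
      then show ?thesis using h[of y p1 A x] a F True opt_sym by metis
    next
      case False
      then show ?thesis using a F orderedD[OF o] by simp
    qed
  qed
qed

lemma shape_iff:
  "is_HVT_shape la T \<longleftrightarrow> is_partition la \<and> dom T = young_diagram la \<and> (\<forall>p U. T p = Some U \<longrightarrow> ss_hook U) \<and> ordered T"
proof -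
  have e: "(\<forall>U\<in>ran T. ss_hook U) \<longleftrightarrow> (\<forall>p U. T p = Some U \<longrightarrow> ss_hook U)"
    unfolding ran_def by blast
  show ?thesis unfolding is_HVT_shape_def ordered_iff e by (rule refl)
qed

lemma yd_down:
  assumes "is_partition la" "(i, j) \<in> young_diagram la" "1 \<le> i'" "i' \<le> i" "1 \<le> j'" "j' \<le> j"
  shows "(i', j') \<in> young_diagram la"
proof -
  have "la ! (i - 1) \<le> la ! (i' - 1)"
  proof (cases "i' = i")
    case False
    then show ?thesis using assms sorted_wrt_nth_less[of "(\<ge>)" la "i' - 1" "i - 1"]
      unfolding is_partition_def young_diagram_def by auto
  qed simp
  then show ?thesis using assms unfolding young_diagram_def by auto
qed

lemma yd_finite: "finite (young_diagram la)"
proof -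
  have "young_diagram la \<subseteq> {0..length la} \<times> {0..sum_list la}"
  proof
    fix z assume "z \<in> young_diagram la"
    then obtain r c where z: "z = (r, c)" "1 \<le> r" "r \<le> length la" "c \<le> la ! (r - 1)"
      unfolding young_diagram_def by blast
    have "la ! (r - 1) \<le> sum_list la" using z by (intro elem_le_sum_list) simp
    then show "z \<in> {0..length la} \<times> {0..sum_list la}" using z by simp
  qed
  then show ?thesis by (rule finite_subset) simp
qed

lemma downset_eq:
  fixes C :: "nat set"
  assumes "finite C" "\<forall>i\<in>C. 1 \<le> i" "\<forall>i\<in>C. \<forall>i'. 1 \<le> i' \<longrightarrow> i' \<le> i \<longrightarrow> i' \<in> C"
  shows "C = {1..card C}"
proof (cases "C = {}")
  case False
  define m where "m = Max C"
  have m: "m \<in> C" using False assms(1) m_def by simp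
  have "C \<subseteq> {1..m}" using assms(1,2) m_def by auto
  moreover have "{1..m} \<subseteq> C" using assms(3) m by auto
  ultimately have "C = {1..m}" by blast
  then show ?thesis by simp
qed simp

lemma hook_x_ents: "hook_x U \<in> ents U"
  by (simp add: ents_simp)

lemma shape_new:
  assumes P: "is_partition la" and D: "dom T = young_diagram la"
    and rtc: "(rt, c) \<in> dom T" and nrt: "(rt, Suc c) \<notin> dom T"
    and below: "\<forall>i. 1 \<le> i \<longrightarrow> i < rt \<longrightarrow> (i, Suc c) \<in> dom T"
  shows "is_partition (la[rt - 1 := Suc c]) \<and> young_diagram (la[rt - 1 := Suc c]) = insert (rt, Suc c) (young_diagram la)"
proof -
  have r1: "1 \<le> rt" "rt \<le> length la" "c \<le> la ! (rt - 1)" "1 \<le> c" using rtc D unfolding young_diagram_def by auto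
  have lc: "la ! (rt - 1) = c" using nrt D r1 unfolding young_diagram_def by auto
  define la' where "la' = la[rt - 1 := Suc c]"
  have len: "length la' = length la" unfolding la'_def by simp
  have srt: "sorted_wrt (\<ge>) la" and pos: "\<forall>x\<in>set la. 0 < x" using P unfolding is_partition_def by auto
  have "sorted_wrt (\<ge>) la'"
    unfolding sorted_wrt_iff_nth_less
  proof (intro allI impI)
    fix i j assume ij: "i < j" "j < length la'"
    have sij: "la ! j \<le> la ! i" using sorted_wrt_nth_less[OF srt ij(1)] ij len by simp
    show "la' ! j \<le> la' ! i"
    proof (cases "j = rt - 1")
      case True
      then have "(Suc i, Suc c) \<in> dom T" using below ij by auto
      then have "Suc c \<le> la ! i" using D unfolding young_diagram_def by auto
      then show ?thesis using True ij len unfolding la'_def by auto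
    next
      case False
      then show ?thesis using sij lc ij len unfolding la'_def by (cases "i = rt - 1") auto
    qed
  qed
  moreover have "\<forall>x\<in>set la'. 0 < x" using pos set_update_subset_insert[of la "rt - 1" "Suc c"]
    unfolding la'_def by auto
  moreover have "young_diagram la' = insert (rt, Suc c) (young_diagram la)"
  proof -
    have nth: "la' ! (i - 1) = (if i = rt then Suc c else la ! (i - 1))" if "1 \<le> i" for i
    proof -
      have "(i - 1 = rt - 1) = (i = rt)" using that r1 by auto
      then show ?thesis unfolding la'_def using r1 that by (cases "i = rt") (auto simp: nth_list_update)
    qed
    show ?thesis
    proof (rule set_eqI)
      fix z :: "nat \<times> nat"
      obtain i j where z: "z = (i, j)" by fastforce
      show "z \<in> young_diagram la' \<longleftrightarrow> z \<in> insert (rt, Suc c) (young_diagram la)"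
        unfolding z young_diagram_def using nth[of i] len r1 lc by (cases "i = rt") auto
    qed
  qed
  ultimately show ?thesis unfolding is_partition_def la'_def by simp
qed

lemma core:
  fixes T :: hvt
  assumes H: "is_HVT_shape la T"
    and P': "is_partition la'" and D': "dom (T((r,c) := Some U', (rt, Suc c) := Some N)) = young_diagram la'"
    and TU: "T (r,c) = Some U" and xa: "hook_x U \<le> a"
    and ssU': "ss_hook U'" and subU': "ents U' \<subseteq> ents U" and leU': "rt = r \<Longrightarrow> \<forall>y\<in>ents U'. y \<le> a"
    and rt1: "1 \<le> rt" and rtr: "rt \<le> r"
    and ssN: "ss_hook N"
    and EN: "\<forall>x\<in>ents N. x \<in> E \<or> (\<exists>V. T (rt, Suc c) = Some V \<and> x \<in> ents V)"
    and aE: "\<forall>x\<in>E. a \<le> x"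
    and W: "(\<exists>V k. T (rt, Suc c) = Some V \<and> k \<in> ents V \<and> (\<forall>x\<in>E. x \<le> k)) \<or> (\<forall>i. rt \<le> i \<longrightarrow> (i, Suc c) \<notin> dom T)"
    and BL: "\<forall>i B y. i < rt \<longrightarrow> T (i, Suc c) = Some B \<longrightarrow> y \<in> ents B \<longrightarrow> y < a"
  shows "is_HVT (T((r,c) := Some U', (rt, Suc c) := Some N))"
proof -
  have P: "is_partition la" and D: "dom T = young_diagram la" and SS: "\<And>p U. T p = Some U \<Longrightarrow> ss_hook U"
    and O: "ordered T" using H unfolding shape_iff by auto
  define T1 where "T1 = T((r,c) := Some U')"
  define p where "p = (rt, Suc c)"
  have O1: "ordered T1" unfolding T1_def by (rule ordered_shrink[OF O TU subU'])
  have neq: "(r, c) \<noteq> p" unfolding p_def by simp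
  have rcd: "(r, c) \<in> young_diagram la" using TU D by auto
  then have c1: "1 \<le> c" unfolding young_diagram_def by auto
  have LEFT: "y \<le> a" if "j \<le> c" "(rt, j) \<noteq> (r, c)" "T (rt, j) = Some B" "y \<in> ents B" for j B y
  proof -
    have "(rt, c) \<in> young_diagram la" using yd_down[OF P rcd rt1 rtr c1] by simp
    then obtain B0 where B0: "T (rt, c) = Some B0" using D by auto
    have hb: "hook_x B0 \<le> hook_x U"
    proof (cases "rt = r")
      case True then show ?thesis using B0 TU by simp
    next
      case False
      then have "opt (rt, c) (hook_x B0) (r, c) (hook_x U)"
        using orderedD[OF O B0 TU _ hook_x_ents hook_x_ents] by simp
      then show ?thesis using False rtr unfolding opt_def by simp
    qed
    show ?thesis
    proof (cases "j = c")
      case True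
      then have "rt \<noteq> r" "B = B0" using that B0 by auto
      then have "opt (rt, c) y (r, c) (hook_x U)"
        using orderedD[OF O B0 TU _ that(4)[unfolded \<open>B = B0\<close>] hook_x_ents] by simp
      then show ?thesis using \<open>rt \<noteq> r\<close> rtr xa unfolding opt_def by simp
    next
      case False
      then have "opt (rt, j) y (rt, c) (hook_x B0)"
        using orderedD[OF O that(3) B0 _ that(4) hook_x_ents] by simp
      then show ?thesis using False that(1) hb xa unfolding opt_def by simp
    qed
  qed
  have newok: "opt p x q y" if x: "x \<in> ents N" and q: "q \<noteq> p" "T1 q = Some B" and y: "y \<in> ents B" for x q B y
  proof (cases "\<exists>V. T (rt, Suc c) = Some V \<and> x \<in> ents V")
    case True
    then obtain V where V: "T (rt, Suc c) = Some V" "x \<in> ents V" by blast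
    then have "T1 p = Some V" using neq unfolding T1_def p_def by simp
    then show ?thesis using orderedD[OF O1 _ q(2) q(1)[symmetric] V(2) y] by simp
  next
    case False
    then have xE: "x \<in> E" using EN x by blast
    then have ax: "a \<le> x" using aE by blast
    obtain i j where qij: "q = (i, j)" by fastforce
    have TB: "T q = Some B" if "q \<noteq> (r, c)" using q(2) that unfolding T1_def by simp
    show ?thesis unfolding opt_def p_def qij fst_conv snd_conv
    proof (intro conjI impI)
      assume a1: "rt = i \<and> Suc c < j"
      then have TB': "T (rt, j) = Some B" using TB qij by simp
      show "x \<le> y"
      proof (cases "\<exists>V k. T (rt, Suc c) = Some V \<and> k \<in> ents V \<and> (\<forall>x\<in>E. x \<le> k)")
        case True
        then obtain V k where V: "T (rt, Suc c) = Some V" "k \<in> ents V" "\<forall>x\<in>E. x \<le> k" by blast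
        have "opt (rt, Suc c) k (rt, j) y" using orderedD[OF O V(1) TB' _ V(2) y] a1 by simp
        then show ?thesis using a1 V(3) xE unfolding opt_def by fastforce
      next
        case False
        then have nd: "(rt, Suc c) \<notin> dom T" using W by blast
        have "(rt, j) \<in> young_diagram la" using TB' D by auto
        then have "(rt, Suc c) \<in> young_diagram la" using yd_down[OF P _ rt1 order.refl, of j "Suc c"] a1 by simp
        then show ?thesis using nd D by simp
      qed
    next
      assume a1: "rt = i \<and> j < Suc c"
      show "y \<le> x"
      proof (cases "q = (r, c)")
        case True
        then have "B = U'" "rt = r" using q(2) a1 qij unfolding T1_def by auto
        then show ?thesis using leU' y ax by fastforce
      next
        case False
        then show ?thesis using LEFT[of j B y] TB a1 qij y ax by fastforce
      qed
    next
      assume a1: "Suc c = j \<and> rt < i"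
      then have TB': "T (i, Suc c) = Some B" using TB qij by simp
      show "x < y"
      proof (cases "\<exists>V k. T (rt, Suc c) = Some V \<and> k \<in> ents V \<and> (\<forall>x\<in>E. x \<le> k)")
        case True
        then obtain V k where V: "T (rt, Suc c) = Some V" "k \<in> ents V" "\<forall>x\<in>E. x \<le> k" by blast
        have "opt (rt, Suc c) k (i, Suc c) y" using orderedD[OF O V(1) TB' _ V(2) y] a1 by simp
        then show ?thesis using a1 V(3) xE unfolding opt_def by fastforce
      next
        case False
        then have "\<forall>i'. rt \<le> i' \<longrightarrow> (i', Suc c) \<notin> dom T" using W by blast
        then have "(i, Suc c) \<notin> dom T" using a1 by simp
        then show ?thesis using TB' by auto
      qed
    next
      assume a1: "Suc c = j \<and> i < rt"
      then have TB': "T (i, Suc c) = Some B" using TB qij by simp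
      show "y < x" using BL TB' a1 y ax by fastforce
    qed
  qed
  have O2: "ordered (T1(p := Some N))"
    by (rule ordered_new[OF O1]) (use newok in blast)
  have SS2: "ss_hook B" if "(T1(p := Some N)) q = Some B" for q B
    using that SS ssU' ssN unfolding T1_def by (auto split: if_splits)
  have "is_HVT_shape la' (T1(p := Some N))"
    unfolding shape_iff using P' D' O2 SS2 unfolding T1_def p_def by blast
  then show ?thesis unfolding is_HVT_def T1_def p_def by blast
qed

lemma ss_x_le: "ss_hook V \<Longrightarrow> y \<in> ents V \<Longrightarrow> hook_x V \<le> y"
  by (auto simp: ss_hook_def ents_simp)

lemma ss_pos: "ss_hook V \<Longrightarrow> 0 < hook_x V"
  by (simp add: ss_hook_def)

lemma sorted_le_last: "sorted (xs :: nat list) \<Longrightarrow> y \<in> set xs \<Longrightarrow> y \<le> last xs"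
proof (induction xs)
  case (Cons z zs)
  then show ?case
  proof (cases "zs = []")
    case False
    then have "last zs \<in> set zs" by simp
    then show ?thesis using Cons False by auto
  qed simp
qed simp

lemma map_replace_sorted:
  fixes xs :: "nat list"
  assumes s: "sorted_wrt (<) xs" and ak: "a \<le> k" and sm: "\<forall>y\<in>set xs. y < k \<longrightarrow> y < a"
  shows "sorted_wrt (<) (map (\<lambda>y. if y = k then a else y) xs)"
  unfolding sorted_wrt_map
proof (rule sorted_wrt_mono_rel[OF _ s])
  fix x y assume "x \<in> set xs" "y \<in> set xs" "x < y"
  then show "(if x = k then a else x) < (if y = k then a else y)" using ak sm by auto
qed

lemma ra_ok:
  assumes ss: "ss_hook V" and arm: "hook_arm V = []" and k: "k \<in> ents V" and ak: "a \<le> k"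
    and sm: "\<forall>y\<in>ents V. y < k \<longrightarrow> y < a" and a0: "0 < a"
  shows "ss_hook (replace_and_append k a V) \<and> ents (replace_and_append k a V) \<subseteq> insert a (ents V)"
proof -
  obtain x leg where V: "V = Hook x leg []" using arm by (cases V) auto
  have sl: "sorted_wrt (<) (x # leg)" and x0: "0 < x" using ss unfolding V ss_hook_def by auto
  show ?thesis
  proof (cases "x = k")
    case True
    have "sorted_wrt (<) (a # leg)" using sl ak True by auto
    then show ?thesis unfolding V replace_and_append_def using True a0 ak
      by (auto simp: ss_hook_def ents_simp)
  next
    case False
    then have kl: "k \<in> set leg" using k unfolding V by (simp add: ents_simp)
    have xk: "x < k" using sl kl by simp
    have "sorted_wrt (<) (map (\<lambda>y. if y = k then a else y) (x # leg))"
      by (rule map_replace_sorted[OF sl ak]) (use sm in \<open>auto simp: V ents_simp\<close>)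
    then have "sorted_wrt (<) (x # map (\<lambda>y. if y = k then a else y) leg)" using False by simp
    then show ?thesis unfolding V replace_and_append_def using False kl x0 xk
      by (auto simp: ss_hook_def ents_simp)
  qed
qed

lemma caseb_ok:
  assumes ss: "ss_hook V" and arm: "hook_arm V = []" and xk: "hook_x V = k" and ak: "a \<le> k"
    and smv: "sorted_wrt (<) mv" and mvb: "\<forall>m\<in>set mv. a < m \<and> m \<le> k" and a0: "0 < a"
  shows "ss_hook (Hook a (sort (hook_leg V @ mv)) (hook_arm V @ [k])) \<and>
         ents (Hook a (sort (hook_leg V @ mv)) (hook_arm V @ [k])) \<subseteq> insert a (set mv \<union> ents V)"
proof -
  have sl: "sorted_wrt (<) (k # hook_leg V)" using ss xk unfolding ss_hook_def by auto
  have dl: "distinct (hook_leg V)" using sl by (simp add: strict_sorted_iff)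
  have dm: "distinct mv" using smv by (simp add: strict_sorted_iff)
  have disj: "set (hook_leg V) \<inter> set mv = {}" using sl mvb by force
  have d: "distinct (sort (hook_leg V @ mv))" using dl dm disj by simp
  have "sorted_wrt (<) (sort (hook_leg V @ mv))" using d by (simp add: strict_sorted_iff)
  moreover have "\<forall>y\<in>set (sort (hook_leg V @ mv)). a < y" using sl mvb ak by force
  ultimately have "sorted_wrt (<) (a # sort (hook_leg V @ mv))" by simp
  then show ?thesis using a0 ak arm xk unfolding ss_hook_def by (auto simp: ents_simp)
qed

lemma Ua_ok:
  assumes ss: "ss_hook U" and arm: "hook_arm U \<noteq> []"
  shows "ss_hook (Hook (hook_x U) (hook_leg U) (butlast (hook_arm U))) \<and>
         ents (Hook (hook_x U) (hook_leg U) (butlast (hook_arm U))) \<subseteq> ents U"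
proof -
  have "sorted (hook_x U # hook_arm U)" using ss unfolding ss_hook_def by simp
  then have "sorted (butlast (hook_x U # hook_arm U))" by (rule sorted_butlast)
  then have "sorted (hook_x U # butlast (hook_arm U))" using arm by simp
  then show ?thesis using ss unfolding ss_hook_def by (auto simp: ents_simp dest: in_set_butlastD)
qed

lemma Ub_ok:
  assumes ss: "ss_hook U" and arm: "hook_arm U \<noteq> []" and a: "a = last (hook_arm U)" and l: "l = last (hook_leg U)"
  shows "ss_hook (Hook (hook_x U) (filter (\<lambda>x. \<not> (a < x \<and> x \<le> l)) (hook_leg U)) (butlast (hook_arm U))) \<and>
         ents (Hook (hook_x U) (filter (\<lambda>x. \<not> (a < x \<and> x \<le> l)) (hook_leg U)) (butlast (hook_arm U))) \<subseteq> ents U \<and>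
         (\<forall>y\<in>ents (Hook (hook_x U) (filter (\<lambda>x. \<not> (a < x \<and> x \<le> l)) (hook_leg U)) (butlast (hook_arm U))). y \<le> a)"
proof -
  have sa: "sorted (hook_x U # hook_arm U)" using ss unfolding ss_hook_def by simp
  then have "sorted (butlast (hook_x U # hook_arm U))" by (rule sorted_butlast)
  then have s1: "sorted (hook_x U # butlast (hook_arm U))" using arm by simp
  have sl: "sorted_wrt (<) (hook_x U # hook_leg U)" using ss unfolding ss_hook_def by simp
  then have sl2: "sorted_wrt (<) (hook_leg U)" by simp
  then have sl3: "sorted (hook_leg U)" by (simp add: strict_sorted_iff)
  have s2: "sorted_wrt (<) (hook_x U # filter (\<lambda>x. \<not> (a < x \<and> x \<le> l)) (hook_leg U))"
    using sl by (auto intro: sorted_wrt_filter)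
  have sar: "sorted (hook_arm U)" using sa by simp
  have alast: "a \<in> set (hook_arm U)" using arm a by simp
  have xa: "hook_x U \<le> a" using sa alast by simp
  have la: "y \<le> a" if "y \<in> set (hook_leg U)" "\<not> (a < y \<and> y \<le> l)" for y
    using sorted_le_last[OF sl3 that(1)] that(2) l by auto
  have ar: "y \<le> a" if "y \<in> set (butlast (hook_arm U))" for y
    using sorted_le_last[OF sar in_set_butlastD[OF that]] a by simp
  show ?thesis using ss s1 s2 xa la ar unfolding ss_hook_def by (auto simp: ents_simp dest: in_set_butlastD)
qed

theorem lemma3p3:
  fixes T :: hvt
  assumes "is_HVT T"
  shows "is_HVT (uncrowd_bump T)"
proof (cases "arm_excess T = 0")
  case True
  then show ?thesis using assms unfolding uncrowd_bump_def by simp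
next
  case False
  note nz = False
  obtain la where H: "is_HVT_shape la T" using assms unfolding is_HVT_def by blast
  have P: "is_partition la" and D: "dom T = young_diagram la" and SS: "\<And>p U. T p = Some U \<Longrightarrow> ss_hook U"
    and O: "ordered T" using H unfolding shape_iff by auto
  have fin: "finite (dom T)" using D yd_finite by simp
  obtain p0 where p0: "p0 \<in> dom T" "length (hook_arm (the (T p0))) \<noteq> 0"
    using nz fin unfolding arm_excess_def by (auto simp: sum_eq_0_iff)
  obtain r0 c0 where hr0: "has_arm T r0 c0" using p0 unfolding has_arm_def
    by (metis domD length_0_conv option.sel surj_pair)
  have bnd: "r' \<le> length la \<and> c' \<le> sum_list la" if "has_arm T r' c'" for r' c'
  proof -
    have "(r', c') \<in> young_diagram la" using that D unfolding has_arm_def by auto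
    then have "1 \<le> r'" "r' \<le> length la" "c' \<le> la ! (r' - 1)" unfolding young_diagram_def by auto
    moreover have "la ! (r' - 1) \<le> sum_list la" using calculation by (intro elem_le_sum_list) simp
    ultimately show ?thesis by simp
  qed
  define c where "c = bump_col T"
  have hasc: "\<exists>r. has_arm T r c" unfolding c_def bump_col_def
    by (rule GreatestI_nat[of _ c0 "sum_list la"]) (use hr0 bnd in blast)+
  have cmax: "c' \<le> c" if "has_arm T r' c'" for r' c' unfolding c_def bump_col_def
    by (rule Greatest_le_nat[of _ c' "sum_list la"]) (use that bnd in blast)+
  define R where "R = {r'. has_arm T r' c}"
  have "R \<subseteq> {..length la}" using bnd unfolding R_def by blast
  then have finR: "finite R" using finite_subset by blast
  have neR: "R \<noteq> {}" using hasc unfolding R_def by auto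
  define M where "M = Max ((\<lambda>r'. arm_top T r' c) ` R)"
  have "M \<in> (\<lambda>r'. arm_top T r' c) ` R" using Max_in finR neR unfolding M_def by blast
  then obtain rm where rm: "rm \<in> R" "arm_top T rm c = M" by blast
  have rmax: "\<forall>r'. has_arm T r' c \<longrightarrow> arm_top T r' c \<le> arm_top T rm c"
  proof (intro allI impI)
    fix r' assume "has_arm T r' c"
    then have "r' \<in> R" unfolding R_def by simp
    then show "arm_top T r' c \<le> arm_top T rm c" unfolding rm(2) M_def using finR by simp
  qed
  define r where "r = bump_row T c"
  have rmR: "has_arm T rm c" using rm(1) unfolding R_def by simp
  have hr: "has_arm T r c \<and> (\<forall>r'. has_arm T r' c \<longrightarrow> arm_top T r' c \<le> arm_top T r c)" unfolding r_def bump_row_def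
    by (rule GreatestI_nat[of _ rm "length la"]) (use rmR rmax bnd in blast)+
  define U where "U = the (T (r, c))"
  have TU: "T (r, c) = Some U" and armU: "hook_arm U \<noteq> []" using hr unfolding has_arm_def U_def by auto
  have ssU: "ss_hook U" using SS[OF TU] .
  define a where "a = last (hook_arm U)"
  define l where "l = last (hook_leg U)"
  define moved where "moved = filter (\<lambda>x. a < x \<and> x \<le> l) (hook_leg U)"
  define Ua where "Ua = Hook (hook_x U) (hook_leg U) (butlast (hook_arm U))"
  define Ub where "Ub = Hook (hook_x U) (filter (\<lambda>x. \<not> (a < x \<and> x \<le> l)) (hook_leg U)) (butlast (hook_arm U))"
  define S where "S = {v. \<exists>r' V. T (r', Suc c) = Some V \<and> v \<in> set (hook_entries V) \<and> a \<le> v}"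
  define C where "C = {r'. (r', Suc c) \<in> dom T}"
  have unc: "uncrowd_bump T =
    (if S = {} then
           (let rt = card C + 1 in
            if rt \<noteq> r then T((r, c) := Some Ua, (rt, Suc c) := Some (Hook a [] []))
            else T((r, c) := Some Ub, (r, Suc c) := Some (Hook a (sort moved) [])))
         else
           (let k = Min S;
                rt = (SOME r'. \<exists>V. T (r', Suc c) = Some V \<and> k \<in> set (hook_entries V));
                V = the (T (rt, Suc c))
            in if rt \<noteq> r then T((r, c) := Some Ua, (rt, Suc c) := Some (replace_and_append k a V))
               else T((r, c) := Some Ub,
                      (r, Suc c) := Some (Hook a (sort (hook_leg V @ moved)) (hook_arm V @ [k])))))"
    using nz unfolding uncrowd_bump_def Let_def c_def[symmetric] r_def[symmetric] U_def[symmetric]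
      a_def[symmetric] l_def[symmetric] moved_def[symmetric] Ua_def[symmetric] Ub_def[symmetric]
      S_def[symmetric] C_def[symmetric]
    by simp
  have sa: "sorted (hook_x U # hook_arm U)" using ssU unfolding ss_hook_def by simp
  have aarm: "a \<in> set (hook_arm U)" using armU unfolding a_def by simp
  have xa: "hook_x U \<le> a" using sa aarm by simp
  have a0: "0 < a" using xa ss_pos[OF ssU] by simp
  have aU: "a \<in> ents U" using aarm by (simp add: ents_simp)
  have UaOK: "ss_hook Ua \<and> ents Ua \<subseteq> ents U" using Ua_ok[OF ssU armU] unfolding Ua_def .
  have UbOK: "ss_hook Ub \<and> ents Ub \<subseteq> ents U \<and> (\<forall>y\<in>ents Ub. y \<le> a)"
    using Ub_ok[OF ssU armU a_def l_def] unfolding Ub_def .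
  have sl: "sorted_wrt (<) (hook_leg U)" using ssU unfolding ss_hook_def by simp
  have mvs: "sorted_wrt (<) moved" unfolding moved_def using sl by (rule sorted_wrt_filter)
  have mvU: "\<forall>m\<in>set moved. a < m \<and> m \<in> ents U" unfolding moved_def by (auto simp: ents_simp)
  have colarm: "hook_arm B = []" if "T (i, Suc c) = Some B" for i B
  proof (rule ccontr)
    assume "hook_arm B \<noteq> []"
    then have "has_arm T i (Suc c)" using that unfolding has_arm_def by simp
    then show False using cmax by fastforce
  qed
  have rcd: "(r, c) \<in> young_diagram la" using TU D by auto
  then have r1: "1 \<le> r" and c1: "1 \<le> c" unfolding young_diagram_def by auto
  have Cfin: "finite C"
  proof -
    have "C \<subseteq> fst ` dom T" unfolding C_def by force
    then show ?thesis using fin finite_subset by blast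
  qed
  have Cset: "C = {1..card C}"
  proof (rule downset_eq[OF Cfin])
    show "\<forall>i\<in>C. 1 \<le> i" unfolding C_def D young_diagram_def by auto
    show "\<forall>i\<in>C. \<forall>i'. 1 \<le> i' \<longrightarrow> i' \<le> i \<longrightarrow> i' \<in> C"
    proof (intro ballI allI impI)
      fix i i' assume "i \<in> C" "1 \<le> i'" "i' \<le> i"
      then show "i' \<in> C" unfolding C_def D using yd_down[OF P _ _ _ _ order.refl, of i "Suc c" i'] by simp
    qed
  qed
  have Sin: "v \<in> S \<longleftrightarrow> (\<exists>r' V. T (r', Suc c) = Some V \<and> v \<in> ents V \<and> a \<le> v)" for v
    unfolding S_def ents_def by simp
  have rowUW: "a \<le> y" if "T (r, Suc c) = Some W" "y \<in> ents W" for W y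
  proof -
    have "opt (r, c) a (r, Suc c) y" using orderedD[OF O TU that(1) _ aU that(2)] by simp
    then show ?thesis unfolding opt_def by simp
  qed
  have rS: "S \<noteq> {}" if rsd: "(r, Suc c) \<in> dom T"
  proof -
    obtain W where W: "T (r, Suc c) = Some W" using domD[OF rsd] by blast
    then have "hook_x W \<in> S" unfolding Sin using rowUW[OF W hook_x_ents] hook_x_ents by blast
    then show ?thesis by blast
  qed
  show ?thesis
  proof (cases "S = {}")
    case True
    note Se = True
    define rt where "rt = card C + 1"
    obtain h where Ch: "C = {1..h}" and hC: "h = card C" using Cset by blast
    have rtd: "rt = h + 1" unfolding rt_def hC ..
    have "r \<notin> C" using rS Se unfolding C_def by blast
    then have rtr: "rt \<le> r" using r1 unfolding Ch rtd by simp
    have rt1: "1 \<le> rt" unfolding rtd by simp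
    have rtc: "(rt, c) \<in> dom T" using yd_down[OF P rcd rt1 rtr c1 order.refl] D by simp
    have "rt \<notin> C" unfolding Ch rtd by simp
    then have nrt: "(rt, Suc c) \<notin> dom T" unfolding C_def by simp
    have below: "\<forall>i. 1 \<le> i \<longrightarrow> i < rt \<longrightarrow> (i, Suc c) \<in> dom T"
    proof (intro allI impI)
      fix i assume "1 \<le> i" "i < rt"
      then have "i \<in> C" unfolding Ch rtd by simp
      then show "(i, Suc c) \<in> dom T" unfolding C_def by simp
    qed
    have noab: "\<forall>i. rt \<le> i \<longrightarrow> (i, Suc c) \<notin> dom T"
    proof (intro allI impI)
      fix i assume "rt \<le> i"
      then have "i \<notin> C" unfolding Ch rtd by simp
      then show "(i, Suc c) \<notin> dom T" unfolding C_def by simp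
    qed
    define la' where "la' = la[rt - 1 := Suc c]"
    have SN: "is_partition la' \<and> young_diagram la' = insert (rt, Suc c) (young_diagram la)"
      unfolding la'_def by (rule shape_new[OF P D rtc nrt below])
    have D': "dom (T((r,c) := Some X, (rt, Suc c) := Some Y)) = young_diagram la'" for X Y
      using SN D rcd by auto
    have BL: "\<forall>i B y. i < rt \<longrightarrow> T (i, Suc c) = Some B \<longrightarrow> y \<in> ents B \<longrightarrow> y < a"
    proof (intro allI impI)
      fix i B y assume a1: "i < rt" "T (i, Suc c) = Some B" "y \<in> ents B"
      show "y < a"
      proof (rule ccontr)
        assume "\<not> y < a"
        then have "y \<in> S" unfolding Sin using a1 by auto
        then show False using Se by simp
      qed
    qed
    show ?thesis
    proof (cases "rt = r")
      case False
      have u: "uncrowd_bump T = T((r, c) := Some Ua, (rt, Suc c) := Some (Hook a [] []))"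
        using unc Se False unfolding rt_def Let_def by simp
      show ?thesis unfolding u
      proof (rule core[OF H _ D' TU xa _ _ _ rt1 rtr, where E="{a}"])
        show "is_partition la'" using SN by simp
        show "ss_hook Ua" "ents Ua \<subseteq> ents U" using UaOK by auto
        show "rt = r \<Longrightarrow> \<forall>y\<in>ents Ua. y \<le> a" using False by simp
        show "ss_hook (Hook a [] [])" using a0 by (simp add: ss_hook_def)
        show "\<forall>x\<in>ents (Hook a [] []). x \<in> {a} \<or> (\<exists>V. T (rt, Suc c) = Some V \<and> x \<in> ents V)"
          by (simp add: ents_simp)
        show "\<forall>x\<in>{a}. a \<le> x" by simp
        show "(\<exists>V k. T (rt, Suc c) = Some V \<and> k \<in> ents V \<and> (\<forall>x\<in>{a}. x \<le> k)) \<or> (\<forall>i. rt \<le> i \<longrightarrow> (i, Suc c) \<notin> dom T)"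
          using noab by blast
        show "\<forall>i B y. i < rt \<longrightarrow> T (i, Suc c) = Some B \<longrightarrow> y \<in> ents B \<longrightarrow> y < a" using BL .
      qed
    next
      case True
      have u: "uncrowd_bump T = T((r, c) := Some Ub, (rt, Suc c) := Some (Hook a (sort moved) []))"
        using unc Se True unfolding rt_def Let_def by simp
      have sm: "sort moved = moved" using mvs by (simp add: strict_sorted_iff sorted_sort_id)
      show ?thesis unfolding u
      proof (rule core[OF H _ D' TU xa _ _ _ rt1 rtr, where E="insert a (set moved)"])
        show "is_partition la'" using SN by simp
        show "ss_hook Ub" "ents Ub \<subseteq> ents U" using UbOK by auto
        show "rt = r \<Longrightarrow> \<forall>y\<in>ents Ub. y \<le> a" using UbOK by simp
        show "ss_hook (Hook a (sort moved) [])" using a0 mvs mvU unfolding sm by (simp add: ss_hook_def)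
        show "\<forall>x\<in>ents (Hook a (sort moved) []). x \<in> insert a (set moved) \<or> (\<exists>V. T (rt, Suc c) = Some V \<and> x \<in> ents V)"
          by (simp add: ents_simp)
        show "\<forall>x\<in>insert a (set moved). a \<le> x" using mvU by auto
        show "(\<exists>V k. T (rt, Suc c) = Some V \<and> k \<in> ents V \<and> (\<forall>x\<in>insert a (set moved). x \<le> k)) \<or> (\<forall>i. rt \<le> i \<longrightarrow> (i, Suc c) \<notin> dom T)"
          using noab by blast
        show "\<forall>i B y. i < rt \<longrightarrow> T (i, Suc c) = Some B \<longrightarrow> y \<in> ents B \<longrightarrow> y < a" using BL .
      qed
    qed
  next
    case False
    note Sne = False
    have "S \<subseteq> (\<Union>p\<in>dom T. ents (the (T p)))"
    proof
      fix v assume "v \<in> S"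
      then obtain r' V where "T (r', Suc c) = Some V" "v \<in> ents V" unfolding Sin by blast
      then show "v \<in> (\<Union>p\<in>dom T. ents (the (T p)))" by force
    qed
    then have finS: "finite S" using fin ents_fin by (meson finite_UN_I finite_subset)
    define k where "k = Min S"
    have kS: "k \<in> S" unfolding k_def using finS Sne by simp
    have kmin: "k \<le> y" if "y \<in> S" for y unfolding k_def using finS that by simp
    have ak: "a \<le> k" using kS unfolding Sin by blast
    define rt where "rt = (SOME r'. \<exists>V. T (r', Suc c) = Some V \<and> k \<in> set (hook_entries V))"
    have "\<exists>r' V. T (r', Suc c) = Some V \<and> k \<in> set (hook_entries V)" using kS unfolding S_def by blast
    then have "\<exists>V. T (rt, Suc c) = Some V \<and> k \<in> set (hook_entries V)" unfolding rt_def by (rule someI_ex)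
    then obtain V where TV: "T (rt, Suc c) = Some V" and kV: "k \<in> ents V" unfolding ents_def by blast
    have Vdef: "V = the (T (rt, Suc c))" using TV by simp
    have armV: "hook_arm V = []" using colarm[OF TV] .
    have ssV: "ss_hook V" using SS[OF TV] .
    have rt1: "1 \<le> rt" using TV D unfolding young_diagram_def by auto
    have rtr: "rt \<le> r"
    proof (rule ccontr)
      assume "\<not> rt \<le> r"
      then have "(r, Suc c) \<in> young_diagram la" using yd_down[OF P _ r1 _ _ order.refl, of rt "Suc c"] TV D by auto
      then obtain W where W: "T (r, Suc c) = Some W" using D by auto
      have "hook_x W \<in> S" unfolding Sin using rowUW[OF W hook_x_ents] hook_x_ents W by blast
      then have "k \<le> hook_x W" by (rule kmin)
      moreover have "opt (r, Suc c) (hook_x W) (rt, Suc c) k" using orderedD[OF O W TV _ hook_x_ents kV] \<open>\<not> rt \<le> r\<close> by simp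
      ultimately show False using \<open>\<not> rt \<le> r\<close> unfolding opt_def by simp
    qed
    have BL: "\<forall>i B y. i < rt \<longrightarrow> T (i, Suc c) = Some B \<longrightarrow> y \<in> ents B \<longrightarrow> y < a"
    proof (intro allI impI)
      fix i B y assume a1: "i < rt" "T (i, Suc c) = Some B" "y \<in> ents B"
      have "opt (i, Suc c) y (rt, Suc c) k" using orderedD[OF O a1(2) TV _ a1(3) kV] a1(1) by simp
      then have "y < k" using a1(1) unfolding opt_def by simp
      show "y < a"
      proof (rule ccontr)
        assume "\<not> y < a"
        then have "y \<in> S" unfolding Sin using a1 by auto
        then show False using kmin \<open>y < k\<close> by fastforce
      qed
    qed
    have vsm: "\<forall>y\<in>ents V. y < k \<longrightarrow> y < a"
    proof (intro ballI impI)
      fix y assume "y \<in> ents V" "y < k"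
      show "y < a"
      proof (rule ccontr)
        assume "\<not> y < a"
        then have "y \<in> S" unfolding Sin using TV \<open>y \<in> ents V\<close> by auto
        then show False using kmin \<open>y < k\<close> by fastforce
      qed
    qed
    have D': "dom (T((r,c) := Some X, (rt, Suc c) := Some Y)) = young_diagram la" for X Y
      using D TV TU by auto
    show ?thesis
    proof (cases "rt = r")
      case False
      have u: "uncrowd_bump T = T((r, c) := Some Ua, (rt, Suc c) := Some (replace_and_append k a V))"
        using unc Sne False unfolding rt_def k_def Vdef Let_def by simp
      have RA: "ss_hook (replace_and_append k a V) \<and> ents (replace_and_append k a V) \<subseteq> insert a (ents V)"
        by (rule ra_ok[OF ssV armV kV ak vsm a0])
      show ?thesis unfolding u
      proof (rule core[OF H _ D' TU xa _ _ _ rt1 rtr, where E="{a}"])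
        show "is_partition la" using P .
        show "ss_hook Ua" "ents Ua \<subseteq> ents U" using UaOK by auto
        show "rt = r \<Longrightarrow> \<forall>y\<in>ents Ua. y \<le> a" using False by simp
        show "ss_hook (replace_and_append k a V)" using RA by simp
        show "\<forall>x\<in>ents (replace_and_append k a V). x \<in> {a} \<or> (\<exists>V. T (rt, Suc c) = Some V \<and> x \<in> ents V)"
          using RA TV by blast
        show "\<forall>x\<in>{a}. a \<le> x" by simp
        show "(\<exists>V k. T (rt, Suc c) = Some V \<and> k \<in> ents V \<and> (\<forall>x\<in>{a}. x \<le> k)) \<or> (\<forall>i. rt \<le> i \<longrightarrow> (i, Suc c) \<notin> dom T)"
          using TV kV ak by blast
        show "\<forall>i B y. i < rt \<longrightarrow> T (i, Suc c) = Some B \<longrightarrow> y \<in> ents B \<longrightarrow> y < a" using BL .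
      qed
    next
      case True
      have u: "uncrowd_bump T = T((r, c) := Some Ub, (rt, Suc c) := Some (Hook a (sort (hook_leg V @ moved)) (hook_arm V @ [k])))"
        using unc Sne True unfolding rt_def k_def Vdef Let_def by simp
      have TV': "T (r, Suc c) = Some V" using TV True by simp
      have xV: "hook_x V \<in> S" unfolding Sin using rowUW[OF TV' hook_x_ents] hook_x_ents TV' by blast
      have xk: "hook_x V = k" using kmin[OF xV] ss_x_le[OF ssV kV] by simp
      have mvk: "\<forall>m\<in>set moved. a < m \<and> m \<le> k"
      proof
        fix m assume m: "m \<in> set moved"
        have "opt (r, c) m (r, Suc c) k" using orderedD[OF O TU TV' _ _ kV] mvU m by simp
        then show "a < m \<and> m \<le> k" using mvU m unfolding opt_def by simp
      qed
      have CB: "ss_hook (Hook a (sort (hook_leg V @ moved)) (hook_arm V @ [k])) \<and>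
         ents (Hook a (sort (hook_leg V @ moved)) (hook_arm V @ [k])) \<subseteq> insert a (set moved \<union> ents V)"
        by (rule caseb_ok[OF ssV armV xk ak mvs mvk a0])
      show ?thesis unfolding u
      proof (rule core[OF H _ D' TU xa _ _ _ rt1 rtr, where E="insert a (set moved)"])
        show "is_partition la" using P .
        show "ss_hook Ub" "ents Ub \<subseteq> ents U" using UbOK by auto
        show "rt = r \<Longrightarrow> \<forall>y\<in>ents Ub. y \<le> a" using UbOK by simp
        show "ss_hook (Hook a (sort (hook_leg V @ moved)) (hook_arm V @ [k]))" using CB by simp
        show "\<forall>x\<in>ents (Hook a (sort (hook_leg V @ moved)) (hook_arm V @ [k])). x \<in> insert a (set moved) \<or> (\<exists>V. T (rt, Suc c) = Some V \<and> x \<in> ents V)"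
          using CB TV by blast
        show "\<forall>x\<in>insert a (set moved). a \<le> x" using mvU by auto
        show "(\<exists>V k. T (rt, Suc c) = Some V \<and> k \<in> ents V \<and> (\<forall>x\<in>insert a (set moved). x \<le> k)) \<or> (\<forall>i. rt \<le> i \<longrightarrow> (i, Suc c) \<notin> dom T)"
          using TV kV ak mvk by blast
        show "\<forall>i B y. i < rt \<longrightarrow> T (i, Suc c) = Some B \<longrightarrow> y \<in> ents B \<longrightarrow> y < a" using BL .
      qed
    qed
  qed
qed

end
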